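(* If $Y_n\to Y$ in $\mathcal H=L^2(0,T;\mathcal K)$, then for each $t\in[0,T]$, $\pi^{Y_n}_t\to\pi^Y_t$ and $\rho^{Y_n}_t\to\rho^Y_t$ in total variation norm.
   Context: Setting: the signal $X(t)\in H$ ($H$ separable Hilbert space) on $(\Omega,\mathcal F,m)$ is the unique generalized solution of $dX=(AX+F(X))dt+B\,dW$ (with $A,F,B$ satisfying: for a reflexive Banach space $K$ densely and continuously embedded in $H$ and some $\eta$, $A+\eta I$, $F+\eta I$ $m$-dissipative on $H$ with $m$-dissipative parts in $K$, $K\subset D(F)$, $F$ maps bounded sets of $K$ to bounded sets of $H$, $W_A(t)=\int_0^tS(t-s)BdW(s)$ continuous in $H$, $D(F_K)$-valued, $\sup_{t\le T}(\|W_A\|_K+\|F_K(W_A)\|_K)<\infty$ a.s.). $\mathcal K$ is a separable Hilbert space and $\zeta:H\to\mathcal K$ measurable with $\int_0^T\|\zeta(X(t))\|^2_{\mathcal K}dt<\infty$ a.s. For an observation path $Y\in\mathcal H$: $\mathfrak C^Y_s(x)=(\zeta(x),Y(s))_{\mathcal K}-\frac12\|\zeta(x)\|^2_{\mathcal K}$, $\rho^Y_t(B)=E\big[1_B(X(t))\exp\int_0^t\mathfrak C^Y_s(X(s))ds\big]$ for Borel $B\subset H$, and $\pi^Y_t=\rho^Y_t/\rho^Y_t(H)$ (the white-noise nonlinear filter). *)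

theory Defs
  imports "HOL-Probability.Probability"
begin

definition frakC :: "('h \<Rightarrow> 'k::real_inner) \<Rightarrow> (real \<Rightarrow> 'k) \<Rightarrow> real \<Rightarrow> 'h \<Rightarrow> real" where
  "frakC \<zeta> Y s x = inner (\<zeta> x) (Y s) - (1/2) * (norm (\<zeta> x))\<^sup>2"

definition rho :: "'a measure \<Rightarrow> (real \<Rightarrow> 'a \<Rightarrow> 'h) \<Rightarrow> ('h \<Rightarrow> 'k::real_inner)
    \<Rightarrow> (real \<Rightarrow> 'k) \<Rightarrow> real \<Rightarrow> 'h set \<Rightarrow> real" where
  "rho M X \<zeta> Y t B = (\<integral>\<omega>. indicator B (X t \<omega>) *
       exp (LINT s:{0..t}|lborel. frakC \<zeta> Y s (X s \<omega>)) \<partial>M)"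

definition pi_filter :: "'a measure \<Rightarrow> (real \<Rightarrow> 'a \<Rightarrow> 'h) \<Rightarrow> ('h \<Rightarrow> 'k::real_inner)
    \<Rightarrow> (real \<Rightarrow> 'k) \<Rightarrow> real \<Rightarrow> 'h set \<Rightarrow> real" where
  "pi_filter M X \<zeta> Y t B = rho M X \<zeta> Y t B / rho M X \<zeta> Y t UNIV"

definition tv_norm :: "('h::topological_space set \<Rightarrow> real) \<Rightarrow> real" where
  "tv_norm \<mu> = (SUP P \<in> {P. finite P \<and> P \<subseteq> sets (borel :: 'h measure) \<and> disjoint P}.
                  \<Sum>A\<in>P. \<bar>\<mu> A\<bar>)"

end

theory Submission
  imports Defs
begin


lemma meas_I:
  fixes X :: "real \<Rightarrow> 'a \<Rightarrow> 'h::{real_inner, second_countable_topology}"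
    and \<zeta> :: "'h \<Rightarrow> 'k::{real_inner, second_countable_topology}"
  assumes "0 \<le> t" "t \<le> T"
    and Xm: "(\<lambda>(s, \<omega>). X s \<omega>) \<in> borel_measurable (restrict_space lborel {0..T} \<Otimes>\<^sub>M M)"
    and zm[measurable]: "\<zeta> \<in> borel_measurable borel" and Ym[measurable]: "Y \<in> borel_measurable lborel"
  shows "(\<lambda>\<omega>. LINT s:{0..t}|lborel. frakC \<zeta> Y s (X s \<omega>)) \<in> borel_measurable M"
proof -
  define c where "c s = max 0 (min T s)" for s :: real
  have cm: "(\<lambda>(\<omega>::'a, s). c s) \<in> measurable (M \<Otimes>\<^sub>M lborel) (restrict_space lborel {0..T})"
    apply (rule measurable_restrict_space2)
    using assms(1,2) apply (auto simp: c_def)[1]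
    unfolding c_def by measurable
  have pm: "(\<lambda>(\<omega>, s). (c s, \<omega>)) \<in> measurable (M \<Otimes>\<^sub>M lborel) (restrict_space lborel {0..T} \<Otimes>\<^sub>M M)"
    using cm by (auto intro!: measurable_Pair simp: split_beta')
  have X'm[measurable]: "(\<lambda>(\<omega>, s). X (c s) \<omega>) \<in> borel_measurable (M \<Otimes>\<^sub>M lborel)"
    using measurable_comp[OF pm Xm] by (simp add: o_def split_beta')
  have X'm2[measurable]: "(\<lambda>x. X (c (snd x)) (fst x)) \<in> borel_measurable (M \<Otimes>\<^sub>M lborel)"
    using X'm by (simp add: split_beta')
  have "(\<lambda>(\<omega>, s). indicator {0..t} s *\<^sub>R frakC \<zeta> Y s (X (c s) \<omega>)) \<in> borel_measurable (M \<Otimes>\<^sub>M lborel)"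
    unfolding frakC_def split_beta' by measurable
  moreover have "\<And>\<omega> s. indicator {0..t} s *\<^sub>R frakC \<zeta> Y s (X (c s) \<omega>) = indicator {0..t} s *\<^sub>R frakC \<zeta> Y s (X s \<omega>)"
    using assms(1,2) by (auto simp: c_def indicator_def)
  ultimately have "(\<lambda>(\<omega>, s). indicator {0..t} s *\<^sub>R frakC \<zeta> Y s (X s \<omega>)) \<in> borel_measurable (M \<Otimes>\<^sub>M lborel)"
    by (metis (no_types, lifting) case_prod_beta' measurable_cong)
  then show ?thesis
    unfolding set_lebesgue_integral_def
    using lborel.borel_measurable_lebesgue_integral[where f="\<lambda>\<omega> s. indicator {0..t} s *\<^sub>R frakC \<zeta> Y s (X s \<omega>)" and N=M] by simp
qed


lemma si_bound:
  fixes f G :: "real \<Rightarrow> real"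
  assumes "f \<in> borel_measurable lborel" "S \<in> sets lborel" "set_integrable lborel S G"
    "\<And>s. s \<in> S \<Longrightarrow> \<bar>f s\<bar> \<le> G s"
  shows "set_integrable lborel S f"
  using assms unfolding set_integrable_def
  by (intro Bochner_Integration.integrable_bound[OF assms(3)[unfolded set_integrable_def]])
     (auto simp: indicator_def intro!: AE_I2 order_trans[OF _ abs_ge_self])

lemma si_abs_le:
  fixes f G :: "real \<Rightarrow> real"
  assumes "set_integrable lborel S f" "set_integrable lborel S G" "\<And>s. s \<in> S \<Longrightarrow> \<bar>f s\<bar> \<le> G s"
  shows "\<bar>LINT s:S|lborel. f s\<bar> \<le> (LINT s:S|lborel. G s)"
proof -
  have "(LINT s:S|lborel. f s) \<le> (LINT s:S|lborel. G s)"
    using assms by (intro set_integral_mono) force+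
  moreover have "(LINT s:S|lborel. - f s) \<le> (LINT s:S|lborel. G s)"
    using assms by (intro set_integral_mono) (auto simp: set_integrable_def, force)
  moreover have "(LINT s:S|lborel. - f s) = - (LINT s:S|lborel. f s)"
    unfolding set_lebesgue_integral_def by simp
  ultimately show ?thesis by linarith
qed

lemma si_subset_le:
  fixes G :: "real \<Rightarrow> real"
  assumes "set_integrable lborel B G" "\<And>s. 0 \<le> G s" "A \<subseteq> B" "A \<in> sets lborel"
  shows "(LINT s:A|lborel. G s) \<le> (LINT s:B|lborel. G s)"
proof -
  have "set_integrable lborel A G" using set_integrable_subset assms by blast
  then show ?thesis
    using assms unfolding set_integrable_def set_lebesgue_integral_def
    by (intro integral_mono) (auto simp: indicator_def)
qed

lemma norm_diff_sq: "(norm (a - b::'k::real_normed_vector))\<^sup>2 \<le> 2 * (norm a)\<^sup>2 + 2 * (norm b)\<^sup>2"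
proof -
  have "norm (a - b) \<le> norm a + norm b" by (rule norm_triangle_ineq4)
  then have "(norm (a - b))\<^sup>2 \<le> (norm a + norm b)\<^sup>2" by (simp add: power_mono)
  also have "\<dots> \<le> 2 * (norm a)\<^sup>2 + 2 * (norm b)\<^sup>2"
    by (smt (verit) sum_squares_bound power2_sum)
  finally show ?thesis .
qed

lemma inner_bound_c:
  fixes a b :: "'k::real_inner"
  assumes "0 < c"
  shows "\<bar>inner a b\<bar> \<le> c/2 * (norm a)\<^sup>2 + 1/(2*c) * (norm b)\<^sup>2"
proof -
  have "\<bar>inner a b\<bar> \<le> norm a * norm b" by (rule Cauchy_Schwarz_ineq2)
  moreover have "norm a * norm b \<le> c/2 * (norm a)\<^sup>2 + 1/(2*c) * (norm b)\<^sup>2"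
  proof -
    have "0 \<le> (c * norm a - norm b)\<^sup>2" by simp
    then have "2 * c * (norm a * norm b) \<le> c\<^sup>2 * (norm a)\<^sup>2 + (norm b)\<^sup>2"
      by (simp add: power2_eq_square algebra_simps)
    then show ?thesis using assms
      by (simp add: field_simps power2_eq_square)
  qed
  ultimately show ?thesis by linarith
qed

lemma si_inner:
  fixes g h :: "real \<Rightarrow> 'k::{real_inner, second_countable_topology}"
  assumes [measurable]: "g \<in> borel_measurable lborel" "h \<in> borel_measurable lborel"
    and "S \<in> sets lborel"
    and "set_integrable lborel S (\<lambda>s. (norm (g s))\<^sup>2)" "set_integrable lborel S (\<lambda>s. (norm (h s))\<^sup>2)"
  shows "set_integrable lborel S (\<lambda>s. inner (g s) (h s))"
proof (rule si_bound[where G="\<lambda>s. 1/2 * (norm (g s))\<^sup>2 + 1/(2*1) * (norm (h s))\<^sup>2"])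
  show "set_integrable lborel S (\<lambda>s. 1/2 * (norm (g s))\<^sup>2 + 1/(2*1) * (norm (h s))\<^sup>2)"
    using assms by (intro set_integral_add) auto
  show "\<bar>g s \<bullet> h s\<bar> \<le> 1/2 * (norm (g s))\<^sup>2 + 1/(2*1) * (norm (h s))\<^sup>2" for s
    using inner_bound_c[of 1 "g s" "h s"] by simp
qed (use assms in auto)

lemma si_diff_sq:
  fixes g h :: "real \<Rightarrow> 'k::{real_inner, second_countable_topology}"
  assumes [measurable]: "g \<in> borel_measurable lborel" "h \<in> borel_measurable lborel"
    and "S \<in> sets lborel"
    and "set_integrable lborel S (\<lambda>s. (norm (g s))\<^sup>2)" "set_integrable lborel S (\<lambda>s. (norm (h s))\<^sup>2)"
  shows "set_integrable lborel S (\<lambda>s. (norm (g s - h s))\<^sup>2)"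
proof (rule si_bound[where G="\<lambda>s. 2 * (norm (g s))\<^sup>2 + 2 * (norm (h s))\<^sup>2"])
  show "set_integrable lborel S (\<lambda>s. 2 * (norm (g s))\<^sup>2 + 2 * (norm (h s))\<^sup>2)"
    using assms by (intro set_integral_add) auto
  show "\<bar>(norm (g s - h s))\<^sup>2\<bar> \<le> 2 * (norm (g s))\<^sup>2 + 2 * (norm (h s))\<^sup>2" for s
    using norm_diff_sq[of "g s" "h s"] by simp
qed (use assms in auto)


lemma conv_I:
  fixes g :: "real \<Rightarrow> 'k::{real_inner, second_countable_topology}"
  assumes gm[measurable]: "g \<in> borel_measurable lborel"
    and Ym[measurable]: "Y \<in> borel_measurable lborel"
    and Ynm[measurable]: "\<And>n. Yn n \<in> borel_measurable lborel"
    and gi: "set_integrable lborel {0..T} (\<lambda>s. (norm (g s))\<^sup>2)"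
    and Yi: "set_integrable lborel {0..T} (\<lambda>s. (norm (Y s))\<^sup>2)"
    and Yni: "\<And>n. set_integrable lborel {0..T} (\<lambda>s. (norm (Yn n s))\<^sup>2)"
    and D: "(\<lambda>n. LINT s:{0..T}|lborel. (norm (Yn n s - Y s))\<^sup>2) \<longlonglongrightarrow> 0"
    and t: "t \<in> {0..T}"
  shows "(\<lambda>n. LINT s:{0..t}|lborel. inner (g s) (Yn n s) - 1/2 * (norm (g s))\<^sup>2)
     \<longlonglongrightarrow> (LINT s:{0..t}|lborel. inner (g s) (Y s) - 1/2 * (norm (g s))\<^sup>2)"
proof (rule LIMSEQ_I)
  fix r :: real assume r: "0 < r"
  define A where "A = (LINT s:{0..T}|lborel. (norm (g s))\<^sup>2)"
  have A0: "0 \<le> A" unfolding A_def set_lebesgue_integral_def by (rule Bochner_Integration.integral_nonneg) (simp add: indicator_def)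
  define c where "c = r / (A + 1)"
  have c0: "0 < c" using r A0 by (simp add: c_def)
  have cA: "c * A < r" using r A0 by (simp add: c_def field_simps)
  have "\<forall>\<^sub>F n in sequentially. (LINT s:{0..T}|lborel. (norm (Yn n s - Y s))\<^sup>2) < c * r"
    using D c0 r by (intro order_tendstoD) auto
  then obtain N where N: "\<And>n. n \<ge> N \<Longrightarrow> (LINT s:{0..T}|lborel. (norm (Yn n s - Y s))\<^sup>2) < c * r"
    by (auto simp: eventually_sequentially)
  have sub: "{0..t} \<subseteq> {0..T}" using t by auto
  have git: "set_integrable lborel {0..t} (\<lambda>s. (norm (g s))\<^sup>2)"
    using set_integrable_subset[OF gi _ sub] by simp
  show "\<exists>no. \<forall>n\<ge>no. norm ((LINT s:{0..t}|lborel. inner (g s) (Yn n s) - 1/2 * (norm (g s))\<^sup>2)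
     - (LINT s:{0..t}|lborel. inner (g s) (Y s) - 1/2 * (norm (g s))\<^sup>2)) < r"
  proof (intro exI allI impI)
    fix n assume n: "n \<ge> N"
    define h where "h s = Yn n s - Y s" for s
    have hm[measurable]: "h \<in> borel_measurable lborel" unfolding h_def by measurable
    have hi: "set_integrable lborel {0..T} (\<lambda>s. (norm (h s))\<^sup>2)"
      unfolding h_def using si_diff_sq[OF Ynm Ym _ Yni Yi] by simp
    have hit: "set_integrable lborel {0..t} (\<lambda>s. (norm (h s))\<^sup>2)"
      using set_integrable_subset[OF hi _ sub] by simp
    have i1: "set_integrable lborel {0..t} (\<lambda>s. inner (g s) (Yn n s))"
      using set_integrable_subset[OF si_inner[OF gm Ynm _ gi Yni] _ sub] by simp
    have i2: "set_integrable lborel {0..t} (\<lambda>s. inner (g s) (Y s))"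
      using set_integrable_subset[OF si_inner[OF gm Ym _ gi Yi] _ sub] by simp
    have i3: "set_integrable lborel {0..t} (\<lambda>s. inner (g s) (h s))"
      using set_integrable_subset[OF si_inner[OF gm hm _ gi hi] _ sub] by simp
    have git2: "set_integrable lborel {0..t} (\<lambda>s. 1/2 * (norm (g s))\<^sup>2)" using git by simp
    have eq: "(LINT s:{0..t}|lborel. inner (g s) (Yn n s) - 1/2 * (norm (g s))\<^sup>2)
     - (LINT s:{0..t}|lborel. inner (g s) (Y s) - 1/2 * (norm (g s))\<^sup>2)
      = (LINT s:{0..t}|lborel. inner (g s) (h s))"
      using i1 i2 git2
      by (simp add: set_integral_diff(2) h_def inner_diff_right)
    define G where "G s = c/2 * (norm (g s))\<^sup>2 + 1/(2*c) * (norm (h s))\<^sup>2" for s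
    have GiT: "set_integrable lborel {0..T} G"
      unfolding G_def using gi hi by (intro set_integral_add) auto
    have Git: "set_integrable lborel {0..t} G"
      using set_integrable_subset[OF GiT _ sub] by simp
    have "\<bar>LINT s:{0..t}|lborel. inner (g s) (h s)\<bar> \<le> (LINT s:{0..t}|lborel. G s)"
      using si_abs_le[OF i3 Git] inner_bound_c[OF c0] unfolding G_def by blast
    also have "\<dots> \<le> (LINT s:{0..T}|lborel. G s)"
      using si_subset_le[OF GiT _ sub] c0 unfolding G_def by simp
    also have "\<dots> = c/2 * A + 1/(2*c) * (LINT s:{0..T}|lborel. (norm (h s))\<^sup>2)"
      unfolding G_def A_def using gi hi by (simp add: set_integral_add(2))
    also have "\<dots> < r"
    proof -
      have "(LINT s:{0..T}|lborel. (norm (h s))\<^sup>2) < c * r" using N[OF n] by (simp add: h_def)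
      then have "1/(2*c) * (LINT s:{0..T}|lborel. (norm (h s))\<^sup>2) < 1/(2*c) * (c * r)"
        using c0 by (intro mult_strict_left_mono) auto
      also have "\<dots> = r / 2" using c0 by simp
      finally show ?thesis using cA by linarith
    qed
    finally show "norm ((LINT s:{0..t}|lborel. inner (g s) (Yn n s) - 1/2 * (norm (g s))\<^sup>2)
     - (LINT s:{0..t}|lborel. inner (g s) (Y s) - 1/2 * (norm (g s))\<^sup>2)) < r"
      using eq by simp
  qed
qed


lemma tv_norm_bounds:
  fixes \<mu> :: "'h::topological_space set \<Rightarrow> real"
  assumes "\<And>P. finite P \<Longrightarrow> P \<subseteq> sets (borel :: 'h measure) \<Longrightarrow> disjoint P \<Longrightarrow> (\<Sum>A\<in>P. \<bar>\<mu> A\<bar>) \<le> b"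
  shows "0 \<le> tv_norm \<mu> \<and> tv_norm \<mu> \<le> b"
proof -
  let ?S = "{P. finite P \<and> P \<subseteq> sets (borel :: 'h measure) \<and> disjoint P}"
  have e: "{} \<in> ?S" by auto
  have bdd: "bdd_above ((\<lambda>P. \<Sum>A\<in>P. \<bar>\<mu> A\<bar>) ` ?S)"
    using assms by (intro bdd_aboveI[where M=b]) auto
  have "(\<Sum>A\<in>{}. \<bar>\<mu> A\<bar>) \<le> tv_norm \<mu>"
    unfolding tv_norm_def by (rule cSUP_upper[OF e bdd])
  moreover have "tv_norm \<mu> \<le> b"
    unfolding tv_norm_def using e assms by (intro cSUP_least) auto
  ultimately show ?thesis by simp
qed

lemma sum_ind_disjoint:
  assumes "finite P" "disjoint P"
  shows "(\<Sum>A\<in>P. indicator A x) \<le> (1::real)"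
proof (cases "\<exists>A\<in>P. x \<in> A")
  case True
  then obtain A where A: "A \<in> P" "x \<in> A" by blast
  have "(\<Sum>B\<in>P. indicator B x) = (\<Sum>B\<in>P. if B = A then 1 else (0::real))"
  proof (rule sum.cong)
    fix B assume "B \<in> P"
    then show "indicator B x = (if B = A then 1 else (0::real))"
      using A disjointD[OF assms(2), of A B] by (auto simp: indicator_def)
  qed simp
  also have "\<dots> = 1" using A assms(1) by simp
  finally show ?thesis by simp
next
  case False
  then have "(\<Sum>B\<in>P. indicator B x) = (\<Sum>B\<in>P. (0::real))"
    by (intro sum.cong) (auto simp: indicator_def)
  then show ?thesis by simp
qed

lemma sum_ind_int_le:
  fixes Z :: "'a \<Rightarrow> 'h::topological_space" and f :: "'a \<Rightarrow> real"
  assumes Zm[measurable]: "Z \<in> borel_measurable M" and fi: "integrable M f"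
    and P: "finite P" "P \<subseteq> sets borel" "disjoint P"
  shows "(\<Sum>A\<in>P. \<integral>\<omega>. indicator A (Z \<omega>) * \<bar>f \<omega>\<bar> \<partial>M) \<le> (\<integral>\<omega>. \<bar>f \<omega>\<bar> \<partial>M)"
proof -
  have fm[measurable]: "f \<in> borel_measurable M" using fi by auto
  have ii: "integrable M (\<lambda>\<omega>. indicator A (Z \<omega>) * \<bar>f \<omega>\<bar>)" if "A \<in> P" for A
  proof (rule Bochner_Integration.integrable_bound[OF integrable_abs[OF fi]])
    have [measurable]: "A \<in> sets borel" using that P by auto
    show "(\<lambda>\<omega>. indicator A (Z \<omega>) * \<bar>f \<omega>\<bar>) \<in> borel_measurable M" by measurable
  qed (auto simp: indicator_def)
  have "(\<Sum>A\<in>P. \<integral>\<omega>. indicator A (Z \<omega>) * \<bar>f \<omega>\<bar> \<partial>M) = (\<integral>\<omega>. (\<Sum>A\<in>P. indicator A (Z \<omega>)) * \<bar>f \<omega>\<bar> \<partial>M)"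
    using ii by (simp add: integral_sum sum_distrib_right)
  also have "\<dots> \<le> (\<integral>\<omega>. \<bar>f \<omega>\<bar> \<partial>M)"
  proof (rule integral_mono)
    show "integrable M (\<lambda>\<omega>. (\<Sum>A\<in>P. indicator A (Z \<omega>)) * \<bar>f \<omega>\<bar>)"
      using ii by (simp add: sum_distrib_right)
    show "integrable M (\<lambda>\<omega>. \<bar>f \<omega>\<bar>)" using fi by auto
    show "(\<Sum>A\<in>P. indicator A (Z \<omega>)) * \<bar>f \<omega>\<bar> \<le> \<bar>f \<omega>\<bar>" for \<omega>
      using sum_ind_disjoint[OF P(1,3), of "Z \<omega>"] by (simp add: mult_left_le_one_le sum_nonneg)
  qed
  finally show ?thesis .
qed

lemma tv_diff_le:
  fixes Z :: "'a \<Rightarrow> 'h::topological_space" and f1 f2 :: "'a \<Rightarrow> real"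
  assumes Zm[measurable]: "Z \<in> borel_measurable M" and f1: "integrable M f1" and f2: "integrable M f2"
    and P: "finite P" "P \<subseteq> sets borel" "disjoint P"
  shows "(\<Sum>A\<in>P. \<bar>(\<integral>\<omega>. indicator A (Z \<omega>) * f1 \<omega> \<partial>M) - (\<integral>\<omega>. indicator A (Z \<omega>) * f2 \<omega> \<partial>M)\<bar>)
      \<le> (\<integral>\<omega>. \<bar>f1 \<omega> - f2 \<omega>\<bar> \<partial>M)"
proof -
  have [measurable]: "f1 \<in> borel_measurable M" "f2 \<in> borel_measurable M" using f1 f2 by auto
  have ii: "integrable M (\<lambda>\<omega>. indicator A (Z \<omega>) * f \<omega>)" if "A \<in> P" "integrable M f" for A and f :: "'a \<Rightarrow> real"
  proof (rule Bochner_Integration.integrable_bound[OF that(2)])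
    have [measurable]: "A \<in> sets borel" using that P by auto
    have [measurable]: "f \<in> borel_measurable M" using that by auto
    show "(\<lambda>\<omega>. indicator A (Z \<omega>) * f \<omega>) \<in> borel_measurable M" by measurable
  qed (auto simp: indicator_def)
  have "(\<Sum>A\<in>P. \<bar>(\<integral>\<omega>. indicator A (Z \<omega>) * f1 \<omega> \<partial>M) - (\<integral>\<omega>. indicator A (Z \<omega>) * f2 \<omega> \<partial>M)\<bar>)
     \<le> (\<Sum>A\<in>P. \<integral>\<omega>. indicator A (Z \<omega>) * \<bar>f1 \<omega> - f2 \<omega>\<bar> \<partial>M)"
  proof (rule sum_mono)
    fix A assume A: "A \<in> P"
    have "(\<integral>\<omega>. indicator A (Z \<omega>) * f1 \<omega> \<partial>M) - (\<integral>\<omega>. indicator A (Z \<omega>) * f2 \<omega> \<partial>M)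
       = (\<integral>\<omega>. indicator A (Z \<omega>) * (f1 \<omega> - f2 \<omega>) \<partial>M)"
      using ii[OF A f1] ii[OF A f2] by (simp add: right_diff_distrib)
    also have "\<bar>\<dots>\<bar> \<le> (\<integral>\<omega>. \<bar>indicator A (Z \<omega>) * (f1 \<omega> - f2 \<omega>)\<bar> \<partial>M)"
      by (rule integral_abs_bound)
    also have "\<dots> = (\<integral>\<omega>. indicator A (Z \<omega>) * \<bar>f1 \<omega> - f2 \<omega>\<bar> \<partial>M)"
      by (intro Bochner_Integration.integral_cong) (auto simp: indicator_def)
    finally show "\<bar>(\<integral>\<omega>. indicator A (Z \<omega>) * f1 \<omega> \<partial>M) - (\<integral>\<omega>. indicator A (Z \<omega>) * f2 \<omega> \<partial>M)\<bar>
       \<le> (\<integral>\<omega>. indicator A (Z \<omega>) * \<bar>f1 \<omega> - f2 \<omega>\<bar> \<partial>M)" .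
  qed
  also have "\<dots> \<le> (\<integral>\<omega>. \<bar>f1 \<omega> - f2 \<omega>\<bar> \<partial>M)"
    using f1 f2 P by (intro sum_ind_int_le) auto
  finally show ?thesis .
qed

lemma tv_pi_le:
  fixes Z :: "'a \<Rightarrow> 'h::topological_space" and f1 f2 :: "'a \<Rightarrow> real"
  assumes Zm[measurable]: "Z \<in> borel_measurable M" and f1: "integrable M f1" and f2: "integrable M f2"
    and P: "finite P" "P \<subseteq> sets borel" "disjoint P"
  shows "(\<Sum>A\<in>P. \<bar>(\<integral>\<omega>. indicator A (Z \<omega>) * f1 \<omega> \<partial>M) / z1 - (\<integral>\<omega>. indicator A (Z \<omega>) * f2 \<omega> \<partial>M) / z2\<bar>)
      \<le> (\<integral>\<omega>. \<bar>f1 \<omega> - f2 \<omega>\<bar> \<partial>M) / \<bar>z1\<bar> + (\<integral>\<omega>. \<bar>f2 \<omega>\<bar> \<partial>M) * \<bar>1/z1 - 1/z2\<bar>"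
proof -
  define a where "a A = (\<integral>\<omega>. indicator A (Z \<omega>) * f1 \<omega> \<partial>M)" for A
  define b where "b A = (\<integral>\<omega>. indicator A (Z \<omega>) * f2 \<omega> \<partial>M)" for A
  have pt: "\<bar>a A / z1 - b A / z2\<bar> \<le> \<bar>a A - b A\<bar> / \<bar>z1\<bar> + \<bar>b A\<bar> * \<bar>1/z1 - 1/z2\<bar>" for A
  proof -
    have "a A / z1 - b A / z2 = (a A - b A) / z1 + b A * (1/z1 - 1/z2)"
      by (simp add: divide_inverse algebra_simps)
    also have "\<bar>\<dots>\<bar> \<le> \<bar>(a A - b A) / z1\<bar> + \<bar>b A * (1/z1 - 1/z2)\<bar>" by (rule abs_triangle_ineq)
    finally show ?thesis by (simp add: abs_mult)
  qed
  have bb: "\<bar>b A\<bar> \<le> (\<integral>\<omega>. indicator A (Z \<omega>) * \<bar>f2 \<omega>\<bar> \<partial>M)" for A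
  proof -
    have "\<bar>b A\<bar> \<le> (\<integral>\<omega>. \<bar>indicator A (Z \<omega>) * f2 \<omega>\<bar> \<partial>M)" unfolding b_def by (rule integral_abs_bound)
    also have "\<dots> = (\<integral>\<omega>. indicator A (Z \<omega>) * \<bar>f2 \<omega>\<bar> \<partial>M)"
      by (intro Bochner_Integration.integral_cong) (auto simp: indicator_def)
    finally show ?thesis .
  qed
  have "(\<Sum>A\<in>P. \<bar>a A / z1 - b A / z2\<bar>) \<le> (\<Sum>A\<in>P. \<bar>a A - b A\<bar> / \<bar>z1\<bar> + \<bar>b A\<bar> * \<bar>1/z1 - 1/z2\<bar>)"
    by (intro sum_mono pt)
  also have "\<dots> = (\<Sum>A\<in>P. \<bar>a A - b A\<bar>) / \<bar>z1\<bar> + (\<Sum>A\<in>P. \<bar>b A\<bar>) * \<bar>1/z1 - 1/z2\<bar>"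
    by (simp add: sum.distrib sum_divide_distrib sum_distrib_right)
  also have "\<dots> \<le> (\<integral>\<omega>. \<bar>f1 \<omega> - f2 \<omega>\<bar> \<partial>M) / \<bar>z1\<bar> + (\<integral>\<omega>. \<bar>f2 \<omega>\<bar> \<partial>M) * \<bar>1/z1 - 1/z2\<bar>"
  proof (intro add_mono mult_right_mono divide_right_mono)
    show "(\<Sum>A\<in>P. \<bar>a A - b A\<bar>) \<le> (\<integral>\<omega>. \<bar>f1 \<omega> - f2 \<omega>\<bar> \<partial>M)"
      unfolding a_def b_def using tv_diff_le[OF Zm f1 f2 P] .
    have "(\<Sum>A\<in>P. \<bar>b A\<bar>) \<le> (\<Sum>A\<in>P. \<integral>\<omega>. indicator A (Z \<omega>) * \<bar>f2 \<omega>\<bar> \<partial>M)"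
      by (intro sum_mono bb)
    also have "\<dots> \<le> (\<integral>\<omega>. \<bar>f2 \<omega>\<bar> \<partial>M)" using sum_ind_int_le[OF Zm f2 P] .
    finally show "(\<Sum>A\<in>P. \<bar>b A\<bar>) \<le> (\<integral>\<omega>. \<bar>f2 \<omega>\<bar> \<partial>M)" .
  qed auto
  finally show ?thesis unfolding a_def b_def .
qed


lemma frakC_le: "frakC \<zeta> Y s y \<le> 1/2 * (norm (Y s))\<^sup>2"
proof -
  have "0 \<le> (norm (\<zeta> y - Y s))\<^sup>2" by simp
  also have "(norm (\<zeta> y - Y s))\<^sup>2 = (norm (\<zeta> y))\<^sup>2 - 2 * inner (\<zeta> y) (Y s) + (norm (Y s))\<^sup>2"
    by (simp add: power2_norm_eq_inner inner_diff_left inner_diff_right inner_commute)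
  finally show ?thesis unfolding frakC_def by simp
qed

lemma I_le:
  fixes \<zeta> :: "'h \<Rightarrow> 'k::{real_inner,second_countable_topology}" and Y :: "real \<Rightarrow> 'k"
  assumes t: "t \<in> {0..T}" and Yi: "set_integrable lborel {0..T} (\<lambda>s. (norm (Y s))\<^sup>2)"
  shows "(LINT s:{0..t}|lborel. frakC \<zeta> Y s (x s)) \<le> 1/2 * (LINT s:{0..T}|lborel. (norm (Y s))\<^sup>2)"
proof -
  have nn: "0 \<le> (LINT s:{0..T}|lborel. (norm (Y s))\<^sup>2)"
    unfolding set_lebesgue_integral_def by (rule Bochner_Integration.integral_nonneg) (simp add: indicator_def)
  have sub: "{0..t} \<subseteq> {0..T}" using t by auto
  show ?thesis
  proof (cases "set_integrable lborel {0..t} (\<lambda>s. frakC \<zeta> Y s (x s))")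
    case True
    have Yit: "set_integrable lborel {0..t} (\<lambda>s. 1/2 * (norm (Y s))\<^sup>2)"
      using set_integrable_subset[OF Yi _ sub] by simp
    have "(LINT s:{0..t}|lborel. frakC \<zeta> Y s (x s)) \<le> (LINT s:{0..t}|lborel. 1/2 * (norm (Y s))\<^sup>2)"
      using True Yit frakC_le by (intro set_integral_mono) auto
    also have "\<dots> \<le> (LINT s:{0..T}|lborel. 1/2 * (norm (Y s))\<^sup>2)"
      using Yi sub by (intro si_subset_le) auto
    finally show ?thesis by simp
  next
    case False
    then have "(LINT s:{0..t}|lborel. frakC \<zeta> Y s (x s)) = 0"
      unfolding set_integrable_def set_lebesgue_integral_def by (rule not_integrable_integral_eq)
    then show ?thesis using nn by simp
  qed
qed


theorem mainTheorem14:
  fixes M :: "'a measure"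
    and X :: "real \<Rightarrow> 'a \<Rightarrow> 'h::{real_inner, complete_space, second_countable_topology}"
    and \<zeta> :: "'h \<Rightarrow> 'k::{real_inner, complete_space, second_countable_topology}"
    and T :: real
    and Yn :: "nat \<Rightarrow> real \<Rightarrow> 'k"
    and Y :: "real \<Rightarrow> 'k"
    and t :: real
  assumes "prob_space M"
    and "0 < T"
    and "\<And>s. s \<in> {0..T} \<Longrightarrow> X s \<in> borel_measurable M"
    and "\<And>\<omega>. \<omega> \<in> space M \<Longrightarrow> continuous_on {0..T} (\<lambda>s. X s \<omega>)"
    and "(\<lambda>(s, \<omega>). X s \<omega>) \<in> borel_measurable (restrict_space lborel {0..T} \<Otimes>\<^sub>M M)"
    and "\<zeta> \<in> borel_measurable borel"
    and "AE \<omega> in M. (\<integral>\<^sup>+ s\<in>{0..T}. ennreal ((norm (\<zeta> (X s \<omega>)))\<^sup>2) \<partial>lborel) < \<infinity>"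
    and "Y \<in> borel_measurable lborel"
    and "set_integrable lborel {0..T} (\<lambda>s. (norm (Y s))\<^sup>2)"
    and "\<And>n. Yn n \<in> borel_measurable lborel"
    and "\<And>n. set_integrable lborel {0..T} (\<lambda>s. (norm (Yn n s))\<^sup>2)"
    and "(\<lambda>n. LINT s:{0..T}|lborel. (norm (Yn n s - Y s))\<^sup>2) \<longlonglongrightarrow> 0"
    and "t \<in> {0..T}"
  shows "(\<lambda>n. tv_norm (\<lambda>B. pi_filter M X \<zeta> (Yn n) t B - pi_filter M X \<zeta> Y t B)) \<longlonglongrightarrow> 0
       \<and> (\<lambda>n. tv_norm (\<lambda>B. rho M X \<zeta> (Yn n) t B - rho M X \<zeta> Y t B)) \<longlonglongrightarrow> 0"
proof -
  note PS = assms(1) and Xmt = assms(3) and Xc = assms(4) and Xj = assms(5) and zm = assms(6)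
    and AEz = assms(7) and Ym = assms(8) and Yi = assms(9) and Ynm = assms(10) and Yni = assms(11)
    and D = assms(12) and t = assms(13)
  interpret prob_space M by (rule PS)
  have t0: "0 \<le> t" "t \<le> T" using t by auto
  define e where "e Y' \<omega> = exp (LINT s:{0..t}|lborel. frakC \<zeta> Y' s (X s \<omega>))" for Y' \<omega>
  have em: "e Y' \<in> borel_measurable M" if "Y' \<in> borel_measurable lborel" for Y'
  proof -
    have [measurable]: "(\<lambda>\<omega>. LINT s:{0..t}|lborel. frakC \<zeta> Y' s (X s \<omega>)) \<in> borel_measurable M"
      by (rule meas_I[OF t0 Xj zm that])
    show ?thesis unfolding e_def by measurable
  qed
  have emn[measurable]: "e (Yn n) \<in> borel_measurable M" for n using em Ynm by blast
  have emY[measurable]: "e Y \<in> borel_measurable M" using em Ym by blast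
  have epos: "0 < e Y' \<omega>" for Y' \<omega> unfolding e_def by simp
  define IY where "IY = (LINT s:{0..T}|lborel. (norm (Y s))\<^sup>2)"
  have IY0: "0 \<le> IY"
    unfolding IY_def set_lebesgue_integral_def by (rule Bochner_Integration.integral_nonneg) (simp add: indicator_def)
  have "Bseq (\<lambda>n. LINT s:{0..T}|lborel. (norm (Yn n s - Y s))\<^sup>2)"
    using D by (intro convergent_imp_Bseq) (auto simp: convergent_def)
  then obtain B where B: "\<And>n. \<bar>LINT s:{0..T}|lborel. (norm (Yn n s - Y s))\<^sup>2\<bar> \<le> B" "0 < B"
    unfolding Bseq_def real_norm_def by blast
  define K where "K = 2 * B + 2 * IY"
  have KY: "IY \<le> K" using B IY0 by (simp add: K_def)
  have KYn: "(LINT s:{0..T}|lborel. (norm (Yn n s))\<^sup>2) \<le> K" for n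
  proof -
    have di: "set_integrable lborel {0..T} (\<lambda>s. (norm (Yn n s - Y s))\<^sup>2)"
      by (rule si_diff_sq[OF Ynm Ym _ Yni Yi]) simp
    have "(LINT s:{0..T}|lborel. (norm (Yn n s))\<^sup>2)
        \<le> (LINT s:{0..T}|lborel. 2 * (norm (Yn n s - Y s))\<^sup>2 + 2 * (norm (Y s))\<^sup>2)"
    proof (rule set_integral_mono)
      show "set_integrable lborel {0..T} (\<lambda>s. 2 * (norm (Yn n s - Y s))\<^sup>2 + 2 * (norm (Y s))\<^sup>2)"
        using di Yi by (intro set_integral_add) auto
      show "(norm (Yn n s))\<^sup>2 \<le> 2 * (norm (Yn n s - Y s))\<^sup>2 + 2 * (norm (Y s))\<^sup>2" for s
        using norm_diff_sq[of "Yn n s - Y s" "- Y s"] by simp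
    qed (rule Yni)
    also have "\<dots> = 2 * (LINT s:{0..T}|lborel. (norm (Yn n s - Y s))\<^sup>2) + 2 * IY"
      using di Yi unfolding IY_def by (simp add: set_integral_add(2))
    also have "\<dots> \<le> K" using B(1)[of n] unfolding K_def by simp
    finally show ?thesis .
  qed
  have ebY: "e Y \<omega> \<le> exp (K/2)" for \<omega>
    unfolding e_def using I_le[OF t Yi, where x="\<lambda>s. X s \<omega>" and \<zeta>=\<zeta>] KY unfolding IY_def by simp
  have ebYn: "e (Yn n) \<omega> \<le> exp (K/2)" for n \<omega>
    unfolding e_def using I_le[OF t Yni[of n], where x="\<lambda>s. X s \<omega>" and \<zeta>=\<zeta>] KYn[of n] by simp
  have ieY: "integrable M (e Y)"
    using ebY epos by (intro integrable_const_bound[where B="exp (K/2)"]) (auto intro!: AE_I2 simp: less_imp_le)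
  have ieYn: "integrable M (e (Yn n))" for n
    using ebYn epos by (intro integrable_const_bound[where B="exp (K/2)"]) (auto intro!: AE_I2 simp: less_imp_le)
  have AEconv: "AE \<omega> in M. (\<lambda>n. e (Yn n) \<omega>) \<longlonglongrightarrow> e Y \<omega>"
    using AEz AE_space
  proof eventually_elim
    fix \<omega> assume fin: "(\<integral>\<^sup>+ s\<in>{0..T}. ennreal ((norm (\<zeta> (X s \<omega>)))\<^sup>2) \<partial>lborel) < \<infinity>"
      and \<omega>: "\<omega> \<in> space M"
    define cl where "cl s = max 0 (min T s)" for s :: real
    define g where "g s = \<zeta> (X (cl s) \<omega>)" for s
    have clT: "cl s \<in> {0..T}" for s using t0 by (auto simp: cl_def)
    have clid: "s \<in> {0..T} \<Longrightarrow> cl s = s" for s by (auto simp: cl_def)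
    have "continuous_on UNIV (\<lambda>s. X (cl s) \<omega>)"
    proof -
      have ccl: "continuous_on UNIV cl" unfolding cl_def by (intro continuous_intros)
      have "cl ` UNIV \<subseteq> {0..T}" using clT by auto
      then show ?thesis by (rule continuous_on_compose2[OF Xc[OF \<omega>] ccl])
    qed
    then have Xcm: "(\<lambda>s. X (cl s) \<omega>) \<in> borel_measurable lborel"
      using borel_measurable_continuous_onI by simp
    have gm[measurable]: "g \<in> borel_measurable lborel" unfolding g_def
      by (rule measurable_compose[OF Xcm zm])
    have gi: "set_integrable lborel {0..T} (\<lambda>s. (norm (g s))\<^sup>2)"
      unfolding set_integrable_def
    proof (rule integrableI_bounded)
      show "(\<lambda>s. indicator {0..T} s *\<^sub>R (norm (g s))\<^sup>2) \<in> borel_measurable lborel" by measurable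
      have "(\<integral>\<^sup>+ s. ennreal (norm (indicator {0..T} s *\<^sub>R (norm (g s))\<^sup>2)) \<partial>lborel)
          = (\<integral>\<^sup>+ s\<in>{0..T}. ennreal ((norm (\<zeta> (X s \<omega>)))\<^sup>2) \<partial>lborel)"
        by (intro nn_integral_cong) (auto simp: indicator_def g_def clid)
      then show "(\<integral>\<^sup>+ s. ennreal (norm (indicator {0..T} s *\<^sub>R (norm (g s))\<^sup>2)) \<partial>lborel) < \<infinity>"
        using fin by simp
    qed
    have eqI: "(LINT s:{0..t}|lborel. inner (g s) (Y' s) - 1/2 * (norm (g s))\<^sup>2)
        = (LINT s:{0..t}|lborel. frakC \<zeta> Y' s (X s \<omega>))" for Y'
      by (rule set_lebesgue_integral_cong) (use t0 in \<open>auto simp: frakC_def g_def clid\<close>)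
    have "(\<lambda>n. LINT s:{0..t}|lborel. inner (g s) (Yn n s) - 1/2 * (norm (g s))\<^sup>2)
     \<longlonglongrightarrow> (LINT s:{0..t}|lborel. inner (g s) (Y s) - 1/2 * (norm (g s))\<^sup>2)"
      by (rule conv_I[OF gm Ym Ynm gi Yi Yni D t])
    then have "(\<lambda>n. LINT s:{0..t}|lborel. frakC \<zeta> (Yn n) s (X s \<omega>))
     \<longlonglongrightarrow> (LINT s:{0..t}|lborel. frakC \<zeta> Y s (X s \<omega>))"
      unfolding eqI .
    then show "(\<lambda>n. e (Yn n) \<omega>) \<longlonglongrightarrow> e Y \<omega>"
      unfolding e_def by (rule tendsto_exp)
  qed
  define \<delta> where "\<delta> n = (\<integral>\<omega>. \<bar>e (Yn n) \<omega> - e Y \<omega>\<bar> \<partial>M)" for n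
  have \<delta>0: "\<delta> \<longlonglongrightarrow> 0"
  proof -
    have "(\<lambda>n. \<integral>\<omega>. \<bar>e (Yn n) \<omega> - e Y \<omega>\<bar> \<partial>M) \<longlonglongrightarrow> (\<integral>\<omega>. 0 \<partial>M)"
    proof (rule integral_dominated_convergence[where w="\<lambda>_. 2 * exp (K/2)"])
      show "AE \<omega> in M. (\<lambda>n. \<bar>e (Yn n) \<omega> - e Y \<omega>\<bar>) \<longlonglongrightarrow> 0"
        using AEconv
      proof eventually_elim
        fix \<omega> assume "(\<lambda>n. e (Yn n) \<omega>) \<longlonglongrightarrow> e Y \<omega>"
        then have "(\<lambda>n. e (Yn n) \<omega> - e Y \<omega>) \<longlonglongrightarrow> 0" by (rule LIM_zero)
        then show "(\<lambda>n. \<bar>e (Yn n) \<omega> - e Y \<omega>\<bar>) \<longlonglongrightarrow> 0" by (rule tendsto_rabs_zero)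
      qed
      show "AE \<omega> in M. norm \<bar>e (Yn n) \<omega> - e Y \<omega>\<bar> \<le> 2 * exp (K/2)" for n
      proof (rule AE_I2)
        fix \<omega>
        show "norm \<bar>e (Yn n) \<omega> - e Y \<omega>\<bar> \<le> 2 * exp (K/2)"
          using ebY[of \<omega>] ebYn[of n \<omega>] epos[of Y \<omega>] epos[of "Yn n" \<omega>] by simp
      qed
    qed auto
    then show ?thesis unfolding \<delta>_def by simp
  qed
  have rho_eq: "rho M X \<zeta> Y' t A = (\<integral>\<omega>. indicator A (X t \<omega>) * e Y' \<omega> \<partial>M)" for Y' A
    by (simp add: rho_def e_def)
  have Xt[measurable]: "X t \<in> borel_measurable M" using Xmt[OF t] .
  have rho_part: "(\<lambda>n. tv_norm (\<lambda>B. rho M X \<zeta> (Yn n) t B - rho M X \<zeta> Y t B)) \<longlonglongrightarrow> 0"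
  proof (rule tendsto_sandwich[where f="\<lambda>_. 0" and h=\<delta>])
    have "0 \<le> tv_norm (\<lambda>B. rho M X \<zeta> (Yn n) t B - rho M X \<zeta> Y t B)
      \<and> tv_norm (\<lambda>B. rho M X \<zeta> (Yn n) t B - rho M X \<zeta> Y t B) \<le> \<delta> n" for n
      unfolding rho_eq \<delta>_def
      by (rule tv_norm_bounds, rule tv_diff_le[OF Xt ieYn ieY]) auto
    then show "\<forall>\<^sub>F n in sequentially. 0 \<le> tv_norm (\<lambda>B. rho M X \<zeta> (Yn n) t B - rho M X \<zeta> Y t B)"
      "\<forall>\<^sub>F n in sequentially. tv_norm (\<lambda>B. rho M X \<zeta> (Yn n) t B - rho M X \<zeta> Y t B) \<le> \<delta> n"
      by auto
  qed (auto simp: \<delta>0)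
  define Z where "Z n = (\<integral>\<omega>. e (Yn n) \<omega> \<partial>M)" for n
  define Z0 where "Z0 = (\<integral>\<omega>. e Y \<omega> \<partial>M)"
  have Z0pos: "0 < Z0"
  proof -
    have "0 \<le> Z0" unfolding Z0_def by (intro Bochner_Integration.integral_nonneg less_imp_le epos)
    moreover have "Z0 \<noteq> 0"
    proof
      assume "Z0 = 0"
      then have "AE \<omega> in M. e Y \<omega> = 0"
      proof -
        have "AE x in M. 0 \<le> e Y x" using epos by (auto intro!: AE_I2 less_imp_le)
        then show ?thesis using integral_nonneg_eq_0_iff_AE[OF ieY] \<open>Z0 = 0\<close> unfolding Z0_def by simp
      qed
      then have "AE \<omega> in M. False"
      proof eventually_elim
        case (elim \<omega>)
        then show False using epos[of Y \<omega>] by simp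
      qed
      then show False by (simp add: AE_False)
    qed
    ultimately show ?thesis by simp
  qed
  have ZZ: "Z \<longlonglongrightarrow> Z0"
  proof -
    have bnd: "\<bar>Z n - Z0\<bar> \<le> \<delta> n" for n
    proof -
      have "Z n - Z0 = (\<integral>\<omega>. e (Yn n) \<omega> - e Y \<omega> \<partial>M)"
        unfolding Z_def Z0_def using ieYn ieY by simp
      also have "\<bar>\<dots>\<bar> \<le> \<delta> n" unfolding \<delta>_def by (rule integral_abs_bound)
      finally show ?thesis .
    qed
    have "(\<lambda>n. Z n - Z0) \<longlonglongrightarrow> 0"
    proof (rule Lim_null_comparison[OF _ \<delta>0])
      show "\<forall>\<^sub>F n in sequentially. norm (Z n - Z0) \<le> \<delta> n"
        by (intro always_eventually allI) (simp add: bnd)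
    qed
    then show ?thesis by (simp add: LIM_zero_iff)
  qed
  define EY where "EY = (\<integral>\<omega>. \<bar>e Y \<omega>\<bar> \<partial>M)"
  define b where "b n = \<delta> n / \<bar>Z n\<bar> + EY * \<bar>1 / Z n - 1 / Z0\<bar>" for n
  have b0: "b \<longlonglongrightarrow> 0"
  proof -
    have "b \<longlonglongrightarrow> 0 / \<bar>Z0\<bar> + EY * \<bar>1 / Z0 - 1 / Z0\<bar>"
      unfolding b_def
      by (intro tendsto_add tendsto_mult tendsto_const tendsto_divide tendsto_rabs tendsto_diff \<delta>0 ZZ)
         (use Z0pos in auto)
    then show ?thesis by simp
  qed
  have pi_eq: "pi_filter M X \<zeta> Y' t A = (\<integral>\<omega>. indicator A (X t \<omega>) * e Y' \<omega> \<partial>M) / (\<integral>\<omega>. e Y' \<omega> \<partial>M)" for Y' A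
    by (simp add: pi_filter_def rho_eq)
  have pi_part: "(\<lambda>n. tv_norm (\<lambda>B. pi_filter M X \<zeta> (Yn n) t B - pi_filter M X \<zeta> Y t B)) \<longlonglongrightarrow> 0"
  proof (rule tendsto_sandwich[where f="\<lambda>_. 0" and h=b])
    have "0 \<le> tv_norm (\<lambda>B. pi_filter M X \<zeta> (Yn n) t B - pi_filter M X \<zeta> Y t B)
      \<and> tv_norm (\<lambda>B. pi_filter M X \<zeta> (Yn n) t B - pi_filter M X \<zeta> Y t B) \<le> b n" for n
      unfolding pi_eq b_def \<delta>_def EY_def Z_def Z0_def
      by (rule tv_norm_bounds, rule tv_pi_le[OF Xt ieYn ieY]) auto
    then show "\<forall>\<^sub>F n in sequentially. 0 \<le> tv_norm (\<lambda>B. pi_filter M X \<zeta> (Yn n) t B - pi_filter M X \<zeta> Y t B)"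
      "\<forall>\<^sub>F n in sequentially. tv_norm (\<lambda>B. pi_filter M X \<zeta> (Yn n) t B - pi_filter M X \<zeta> Y t B) \<le> b n"
      by auto
  qed (auto simp: b0)
  show ?thesis using pi_part rho_part by simp
qed

end
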